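(* The constant stationary solution $\overline U\equiv\kappa$ is linearly stable if $\kappa<1+4\pi^2D$ and linearly unstable if $\kappa>1+4\pi^2D$.
   Context: $\mathbb{T}=[0,1]$ with endpoints identified; $D>0,\kappa>0$. Evolution problem: $\partial_tu=Du_{xx}-u+\kappa e^u/\int_0^1e^{u}dy$ with periodic boundary conditions; $\overline U\equiv\kappa$ is its unique constant stationary solution. The linearization at $\overline U$ is the operator $\varphi\mapsto D\varphi_{xx}+(\kappa-1)\varphi-\kappa\int_0^1\varphi\,dy$ on $L^2(\mathbb{T})$ with domain $W^{2,2}(\mathbb{T})$. Linearly stable means all its eigenvalues are negative; linearly unstable means it has a positive eigenvalue. *)

theory Defs
  imports "HOL-Analysis.Analysis"
begin

text \<open>Functions on the circle T = [0,1] with endpoints identified are represented as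
  1-periodic functions on the reals.  A periodic function phi lies in W^{2,2}(T) with
  (weak) second derivative psi iff phi is C^1 and periodic, its derivative phi' is periodic
  and absolutely continuous with a.e. derivative psi, and psi is square integrable on [0,1].\<close>

definition W22_per :: "(real \<Rightarrow> real) \<Rightarrow> (real \<Rightarrow> real) \<Rightarrow> bool" where
  "W22_per \<phi> \<psi> \<longleftrightarrow>
     (\<forall>x. \<phi> (x + 1) = \<phi> x) \<and>
     \<psi> integrable_on {0..1} \<and> (\<lambda>x. (\<psi> x)\<^sup>2) integrable_on {0..1} \<and>
     (\<exists>\<phi>'. (\<forall>x. (\<phi> has_real_derivative \<phi>' x) (at x)) \<and>
           (\<forall>x. \<phi>' (x + 1) = \<phi>' x) \<and>
           (\<forall>x\<in>{0..1}. \<phi>' x = \<phi>' 0 + integral {0..x} \<psi>))"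

text \<open>Eigenvalue of the linearization
  L phi = D phi'' + (kappa - 1) phi - kappa * int_0^1 phi  on L^2(T), domain W^{2,2}(T):
  a nonzero phi in the domain with L phi = lambda phi in L^2, i.e. almost everywhere.\<close>

definition lin_eigenvalue :: "real \<Rightarrow> real \<Rightarrow> real \<Rightarrow> bool" where
  "lin_eigenvalue D \<kappa> \<mu> \<longleftrightarrow>
     (\<exists>\<phi> \<psi>. W22_per \<phi> \<psi> \<and> (\<exists>x. \<phi> x \<noteq> 0) \<and>
        {x\<in>{0..1}. D * \<psi> x + (\<kappa> - 1) * \<phi> x - \<kappa> * integral {0..1} \<phi> \<noteq> \<mu> * \<phi> x}
          \<in> null_sets lebesgue)"

definition linearly_stable :: "real \<Rightarrow> real \<Rightarrow> bool" where
  "linearly_stable D \<kappa> \<longleftrightarrow> (\<forall>\<mu>. lin_eigenvalue D \<kappa> \<mu> \<longrightarrow> \<mu> < 0)"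

definition linearly_unstable :: "real \<Rightarrow> real \<Rightarrow> bool" where
  "linearly_unstable D \<kappa> \<longleftrightarrow> (\<exists>\<mu>>0. lin_eigenvalue D \<kappa> \<mu>)"

end

theory Submission
  imports Defs
begin

lemma periodic_int:
  fixes f :: "real \<Rightarrow> 'a"
  assumes "\<And>x. f (x + 1) = f x"
  shows "f (x + real_of_int n) = f x"
proof (induction n rule: int_induct[where k=0])
  case base then show ?case by simp
next
  case (step1 i)
  have "f (x + real_of_int (i + 1)) = f ((x + real_of_int i) + 1)" by (simp add: add.assoc)
  also have "\<dots> = f x" using assms step1 by simp
  finally show ?case .
next
  case (step2 i)
  have "f (x + real_of_int (i - 1)) = f ((x + real_of_int (i - 1)) + 1)" by (rule assms[symmetric])
  also have "f ((x + real_of_int (i - 1)) + 1) = f (x + real_of_int i)" by (simp add: algebra_simps)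
  also have "f (x + real_of_int i) = f x" by (rule step2)
  finally show ?case .
qed

lemma periodic_zero:
  fixes f :: "real \<Rightarrow> real"
  assumes "\<And>x. f (x + 1) = f x" "\<And>x. x \<in> {0..1} \<Longrightarrow> f x = 0"
  shows "f y = 0"
proof -
  have "f y = f ((y - real_of_int \<lfloor>y\<rfloor>) + real_of_int \<lfloor>y\<rfloor>)" by simp
  also have "\<dots> = f (y - real_of_int \<lfloor>y\<rfloor>)" by (rule periodic_int) (rule assms(1))
  also have "\<dots> = 0"
  proof (rule assms(2))
    show "y - real_of_int \<lfloor>y\<rfloor> \<in> {0..1}"
      using frac_lt_1[of y] frac_ge_0[of y] unfolding frac_def by simp
  qed
  finally show ?thesis .
qed

lemma stable_part:
  fixes D \<kappa> \<mu> :: real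
  assumes Dpos: "D > 0" and kap: "\<kappa> < 1 + 4 * pi\<^sup>2 * D" and ev: "lin_eigenvalue D \<kappa> \<mu>"
  shows "\<mu> < 0"
proof (rule ccontr)
  assume "\<not> \<mu> < 0"
  hence mu: "\<mu> \<ge> 0" by simp
  obtain \<phi> \<psi> x0 where W: "W22_per \<phi> \<psi>" and nz: "\<phi> x0 \<noteq> 0"
    and N: "{x\<in>{0..1}. D * \<psi> x + (\<kappa> - 1) * \<phi> x - \<kappa> * integral {0..1} \<phi> \<noteq> \<mu> * \<phi> x}
          \<in> null_sets lebesgue"
    using ev unfolding lin_eigenvalue_def by blast
  obtain \<phi>' where per: "\<And>x. \<phi> (x + 1) = \<phi> x"
    and der: "\<And>x. (\<phi> has_real_derivative \<phi>' x) (at x)"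
    and per': "\<And>x. \<phi>' (x + 1) = \<phi>' x"
    and rep: "\<And>x. x\<in>{0..1} \<Longrightarrow> \<phi>' x = \<phi>' 0 + integral {0..x} \<psi>"
    using W unfolding W22_per_def by blast
  define m where "m = integral {0..1} \<phi>"
  define S where "S = {x\<in>{0..1}. D * \<psi> x + (\<kappa> - 1) * \<phi> x - \<kappa> * m \<noteq> \<mu> * \<phi> x}"
  have negS: "negligible S" using N unfolding S_def m_def negligible_iff_null_sets .
  have contphi: "continuous_on A \<phi>" for A
    using der by (meson DERIV_continuous_on has_field_derivative_at_within)
  define c where "c = (\<mu> - \<kappa> + 1) / D"
  define d where "d = \<kappa> * m / D"
  have psi_eq: "\<psi> x = c * \<phi> x + d" if "x \<in> {0..1} - S" for x
  proof -
    have "D * \<psi> x + (\<kappa> - 1) * \<phi> x - \<kappa> * m = \<mu> * \<phi> x" using that unfolding S_def by auto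
    then show ?thesis unfolding c_def d_def using Dpos by (simp add: field_simps)
  qed
  have int_lin: "integral {0..x} \<psi> = c * integral {0..x} \<phi> + d * x" if "x \<in> {0..1}" for x
  proof -
    have "integral {0..x} \<psi> = integral {0..x} (\<lambda>t. c * \<phi> t + d)"
      by (rule integral_spike[OF negS]) (use psi_eq that in auto)
    also have "((\<lambda>t. c * \<phi> t + d) has_integral (c * integral {0..x} \<phi> + d * x)) {0..x}"
    proof (intro has_integral_add has_integral_mult_right integrable_integral integrable_continuous_real contphi)
      show "((\<lambda>t. d) has_integral d * x) {0..x}" using has_integral_const_real[of d 0 x] that by (simp add: mult.commute)
    qed
    then have "integral {0..x} (\<lambda>t. c * \<phi> t + d) = c * integral {0..x} \<phi> + d * x"
      by (simp add: integral_unique)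
    finally show ?thesis .
  qed
  have "\<phi>' 1 = \<phi>' 0" using per'[of 0] by simp
  with rep[of 1] int_lin[of 1] have "c * m + d = 0" unfolding m_def by simp
  hence "(\<mu> + 1) * m = 0" unfolding c_def d_def using Dpos by (simp add: field_simps)
  with mu have m0: "m = 0" by simp
  have rep2: "\<phi>' x = \<phi>' 0 + c * integral {0..x} \<phi>" if "x \<in> {0..1}" for x
    using rep[OF that] int_lin[OF that] m0 unfolding d_def by simp
  have der1: "(\<phi> has_real_derivative \<phi>' x) (at x within {0..1})" for x
    using der has_field_derivative_at_within by blast
  have der2: "(\<phi>' has_real_derivative c * \<phi> x) (at x within {0..1})" if x: "x \<in> {0..1}" for x
  proof -
    have "((\<lambda>u. \<phi>' 0 + c * integral {0..u} \<phi>) has_real_derivative (0 + c * \<phi> x)) (at x within {0..1})"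
      by (intro DERIV_add DERIV_const DERIV_cmult integral_has_real_derivative contphi x)
    then have "((\<lambda>u. \<phi>' 0 + c * integral {0..u} \<phi>) has_real_derivative (c * \<phi> x)) (at x within {0..1})"
      by simp
    then show ?thesis
    proof (rule has_field_derivative_transform_within[where d=1])
      fix y :: real assume "y \<in> {0..1}"
      then show "\<phi>' 0 + c * integral {0..y} \<phi> = \<phi>' y" by (rule rep2[symmetric])
    qed (use x in auto)
  qed
  have contphi': "continuous_on {0..1} \<phi>'" using der2 by (rule DERIV_continuous_on)
  have zero: "\<phi> x = 0" if x: "x \<in> {0..1}" for x
  proof (cases "c \<ge> 0")
    case True
    define F where "F = (\<lambda>x. \<phi> x * \<phi>' x)"
    have "((\<lambda>x. \<phi>' x * \<phi>' x + \<phi> x * (c * \<phi> x)) has_integral (F 1 - F 0)) {0..1}"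
    proof (rule fundamental_theorem_of_calculus)
      fix x :: real assume x: "x \<in> {0..1}"
      have "(F has_real_derivative (\<phi>' x * \<phi>' x + \<phi> x * (c * \<phi> x))) (at x within {0..1})"
        unfolding F_def using DERIV_mult'[OF der1 der2[OF x]] by (simp add: algebra_simps)
      then show "(F has_vector_derivative (\<phi>' x * \<phi>' x + \<phi> x * (c * \<phi> x))) (at x within {0..1})"
        by (simp add: has_real_derivative_iff_has_vector_derivative)
    qed simp
    moreover have "F 1 = F 0" unfolding F_def using per[of 0] per'[of 0] by simp
    ultimately have I: "((\<lambda>x. \<phi>' x * \<phi>' x + \<phi> x * (c * \<phi> x)) has_integral 0) (cbox 0 1)" by simp
    have zz: "\<phi>' y * \<phi>' y + \<phi> y * (c * \<phi> y) = 0" if y: "y \<in> {0..1}" for y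
    proof (rule has_integral_0_cbox_imp_0[OF _ _ I])
      show "continuous_on (cbox 0 1) (\<lambda>x. \<phi>' x * \<phi>' x + \<phi> x * (c * \<phi> x))"
        using contphi' contphi by (auto intro!: continuous_intros)
      show "0 \<le> \<phi>' x * \<phi>' x + \<phi> x * (c * \<phi> x)" for x
        using True by (simp add: mult.left_commute[of "\<phi> x"])
      show "box 0 (1::real) \<noteq> {}" by (simp add: box_real)
      show "y \<in> cbox 0 1" using y by simp
    qed
    have dz: "\<phi>' y = 0" if y: "y \<in> {0..1}" for y
    proof -
      have "0 \<le> \<phi> y * (c * \<phi> y)" using True by (simp add: mult.left_commute[of "\<phi> y"])
      moreover have "0 \<le> \<phi>' y * \<phi>' y" by simp
      ultimately have "\<phi>' y * \<phi>' y = 0" using zz[OF y] by linarith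
      then show ?thesis by simp
    qed
    have "\<exists>k. \<forall>y\<in>{0..1}. \<phi> y = k"
    proof (rule has_field_derivative_zero_constant)
      show "convex {0..1::real}" by (rule convex_real_interval)
      fix y :: real assume y: "y \<in> {0..1}"
      show "(\<phi> has_field_derivative 0) (at y within {0..1})" using der1[of y] dz[OF y] by simp
    qed
    then obtain k where k: "\<And>y. y \<in> {0..1} \<Longrightarrow> \<phi> y = k" by blast
    have "m = integral {0..1::real} (\<lambda>_. k)" unfolding m_def by (rule Henstock_Kurzweil_Integration.integral_cong) (rule k)
    hence "k = 0" using m0 by simp
    then show ?thesis using k x by simp
  next
    case False
    hence cneg: "c < 0" by simp
    define \<omega> where "\<omega> = sqrt (- c)"
    have w0: "\<omega> > 0" unfolding \<omega>_def using cneg by simp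
    have w2: "\<omega> * \<omega> = - c" unfolding \<omega>_def using cneg by simp
    have "\<mu> - \<kappa> + 1 > - (4 * pi\<^sup>2) * D" using mu kap by linarith
    hence "c > - (4 * pi\<^sup>2)" unfolding c_def using Dpos by (simp add: less_divide_eq)
    hence "\<omega>\<^sup>2 < (2 * pi)\<^sup>2" using w2 by (simp add: power2_eq_square)
    hence wlt: "\<omega> < 2 * pi" by (rule power_less_imp_less_base) simp
    have cos1: "cos \<omega> \<noteq> 1"
    proof
      assume "cos \<omega> = 1"
      then obtain n :: int where n: "\<omega> = real_of_int n * 2 * pi" by (auto simp: cos_one_2pi_int)
      have "real_of_int n > 0" using w0 n by (simp add: zero_less_mult_iff)
      hence "real_of_int n \<ge> 1" by simp
      hence "\<omega> \<ge> 2 * pi" using n by simp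
      with wlt show False by simp
    qed
    define A where "A = \<phi> 0"
    define B where "B = \<phi>' 0 / \<omega>"
    define g where "g = (\<lambda>t. \<phi> t - A * cos (\<omega> * t) - B * sin (\<omega> * t))"
    define g' where "g' = (\<lambda>t. \<phi>' t + A * \<omega> * sin (\<omega> * t) - B * \<omega> * cos (\<omega> * t))"
    have dg: "(g has_real_derivative g' y) (at y within {0..1})" for y
      unfolding g_def g'_def
      by (rule derivative_eq_intros der1 refl | simp)+
    have dg': "(g' has_real_derivative (- (\<omega> * \<omega>) * g y)) (at y within {0..1})" if y: "y \<in> {0..1}" for y
    proof -
      have "(g' has_real_derivative (c * \<phi> y + A * \<omega> * (cos (\<omega> * y) * \<omega>) - B * \<omega> * (- sin (\<omega> * y) * \<omega>))) (at y within {0..1})"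
        unfolding g'_def
        by (intro DERIV_add DERIV_diff der2[OF y] DERIV_cmult DERIV_sin DERIV_cos DERIV_chain2[where g="\<lambda>t. \<omega> * t"]
             derivative_eq_intros refl) auto
      moreover have "c * \<phi> y + A * \<omega> * (cos (\<omega> * y) * \<omega>) - B * \<omega> * (- sin (\<omega> * y) * \<omega>) = - (\<omega> * \<omega>) * g y"
      proof -
        have cw: "c = - (\<omega> * \<omega>)" using w2 by simp
        show ?thesis unfolding g_def cw by (simp add: algebra_simps)
      qed
      ultimately show ?thesis by simp
    qed
    define E where "E = (\<lambda>t. g' t * g' t + \<omega> * \<omega> * (g t * g t))"
    have dE: "(E has_real_derivative 0) (at y within {0..1})" if y: "y \<in> {0..1}" for y
    proof -
      have d1: "((\<lambda>t. g' t * g' t) has_real_derivative g' y * (- (\<omega> * \<omega>) * g y) + (- (\<omega> * \<omega>) * g y) * g' y) (at y within {0..1})"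
        by (rule DERIV_mult'[OF dg'[OF y] dg'[OF y]])
      have d2: "((\<lambda>t. g t * g t) has_real_derivative g y * g' y + g' y * g y) (at y within {0..1})"
        by (rule DERIV_mult'[OF dg dg])
      have d3: "((\<lambda>t. \<omega> * \<omega> * (g t * g t)) has_real_derivative \<omega> * \<omega> * (g y * g' y + g' y * g y)) (at y within {0..1})"
        by (rule DERIV_cmult[OF d2])
      have "(E has_real_derivative (g' y * (- (\<omega> * \<omega>) * g y) + (- (\<omega> * \<omega>) * g y) * g' y + \<omega> * \<omega> * (g y * g' y + g' y * g y))) (at y within {0..1})"
        unfolding E_def by (rule DERIV_add[OF d1 d3])
      moreover have "g' y * (- (\<omega> * \<omega>) * g y) + (- (\<omega> * \<omega>) * g y) * g' y + \<omega> * \<omega> * (g y * g' y + g' y * g y) = 0"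
        by (simp add: algebra_simps)
      ultimately show ?thesis by simp
    qed
    have "\<exists>k. \<forall>y\<in>{0..1}. E y = k"
      by (rule has_field_derivative_zero_constant) (auto intro: dE)
    then obtain k where k: "\<And>y. y \<in> {0..1} \<Longrightarrow> E y = k" by blast
    have "E 0 = 0" unfolding E_def g_def g'_def A_def B_def using w0 by simp
    hence E0: "E y = 0" if "y \<in> {0..1}" for y using k[OF that] k[of 0] by simp
    have gz: "g y = 0 \<and> g' y = 0" if y: "y \<in> {0..1}" for y
    proof -
      have a: "0 \<le> g' y * g' y" by simp
      have b: "0 \<le> g y * g y" by simp
      have "g' y * g' y + \<omega> * \<omega> * (g y * g y) = 0" using E0[OF y] unfolding E_def by simp
      moreover have "0 \<le> \<omega> * \<omega> * (g y * g y)" using b w0 by simp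
      ultimately have "g' y * g' y = 0" "\<omega> * \<omega> * (g y * g y) = 0" using a by linarith+
      then show ?thesis using w0 by simp
    qed
    have e1: "A - A * cos \<omega> - B * sin \<omega> = 0"
      using gz[of 1] per[of 0] unfolding g_def A_def by simp
    have "\<phi>' 0 + A * \<omega> * sin \<omega> - B * \<omega> * cos \<omega> = 0"
      using gz[of 1] per'[of 0] unfolding g'_def by simp
    moreover have "\<phi>' 0 = B * \<omega>" unfolding B_def using w0 by simp
    ultimately have "\<omega> * (B + A * sin \<omega> - B * cos \<omega>) = 0" by (simp add: algebra_simps)
    hence e2: "B + A * sin \<omega> - B * cos \<omega> = 0" using w0 by simp
    have "A * (A - A * cos \<omega> - B * sin \<omega>) + B * (B + A * sin \<omega> - B * cos \<omega>) = 0"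
      using e1 e2 by simp
    moreover have "(A * A + B * B) * (1 - cos \<omega>) = A * (A - A * cos \<omega> - B * sin \<omega>) + B * (B + A * sin \<omega> - B * cos \<omega>)"
      by algebra
    ultimately have ABc: "(A * A + B * B) * (1 - cos \<omega>) = 0" by simp
    have "1 - cos \<omega> \<noteq> 0" using cos1 by simp
    with ABc have "A * A + B * B = 0" by (metis mult_eq_0_iff)
    hence AB: "A = 0" "B = 0" by (simp_all add: sum_squares_eq_zero_iff)
    show ?thesis using gz[OF x] AB unfolding g_def by simp
  qed
  have "\<phi> x0 = 0" using periodic_zero[of \<phi>, OF per zero] .
  with nz show False by simp
qed

lemma unstable_part:
  fixes D \<kappa> :: real
  assumes "D > 0" "\<kappa> > 1 + 4 * pi\<^sup>2 * D"
  shows "linearly_unstable D \<kappa>"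
proof -
  define \<mu> where "\<mu> = \<kappa> - 1 - 4 * pi\<^sup>2 * D"
  have mu: "\<mu> > 0" using assms unfolding \<mu>_def by simp
  define \<phi> where "\<phi> = (\<lambda>x::real. cos (2*pi*x))"
  define \<psi> where "\<psi> = (\<lambda>x::real. - (4*pi\<^sup>2) * cos (2*pi*x))"
  define \<phi>' where "\<phi>' = (\<lambda>x::real. - (2*pi) * sin (2*pi*x))"
  have per: "\<phi> (x+1) = \<phi> x" for x
    unfolding \<phi>_def by (simp add: distrib_left cos_add)
  have per': "\<phi>' (x+1) = \<phi>' x" for x
    unfolding \<phi>'_def by (simp add: distrib_left sin_add)
  have cont\<psi>: "continuous_on {0..1} \<psi>" unfolding \<psi>_def by (intro continuous_intros)
  have cont\<psi>2: "continuous_on {0..1} (\<lambda>x. (\<psi> x)\<^sup>2)" unfolding \<psi>_def by (intro continuous_intros)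
  have der: "(\<phi> has_real_derivative \<phi>' x) (at x)" for x
    unfolding \<phi>_def \<phi>'_def by (auto intro!: derivative_eq_intros)
  have der': "(\<phi>' has_real_derivative \<psi> x) (at x)" for x
    unfolding \<psi>_def \<phi>'_def by (auto intro!: derivative_eq_intros simp: power2_eq_square)
  have intpsi: "integral {0..x} \<psi> = \<phi>' x - \<phi>' 0" if "x \<ge> 0" for x
  proof -
    have "(\<psi> has_integral (\<phi>' x - \<phi>' 0)) {0..x}"
    proof (rule fundamental_theorem_of_calculus[OF that])
      fix y :: real
      have "(\<phi>' has_real_derivative \<psi> y) (at y within {0..x})"
        using der' by (rule has_field_derivative_at_within)
      then show "(\<phi>' has_vector_derivative \<psi> y) (at y within {0..x})"
        by (simp add: has_real_derivative_iff_has_vector_derivative)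
    qed
    then show ?thesis by (rule integral_unique)
  qed
  have W: "W22_per \<phi> \<psi>"
    unfolding W22_per_def
  proof (intro conjI exI[of _ \<phi>'])
    show "\<psi> integrable_on {0..1}" by (rule integrable_continuous_real[OF cont\<psi>])
    show "(\<lambda>x. (\<psi> x)\<^sup>2) integrable_on {0..1}" by (rule integrable_continuous_real[OF cont\<psi>2])
  qed (use per per' der intpsi in auto)
  have intphi: "integral {0..1} \<phi> = 0"
  proof -
    have "(\<phi> has_integral (sin (2*pi*1)/(2*pi) - sin (2*pi*0)/(2*pi))) {0..1}"
    proof (rule fundamental_theorem_of_calculus)
      fix x :: real
      have "((\<lambda>x::real. sin (2*pi*x)/(2*pi)) has_real_derivative cos (2*pi*x)) (at x within {0..1})"
        by (auto intro!: derivative_eq_intros)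
      then show "((\<lambda>x::real. sin (2*pi*x)/(2*pi)) has_vector_derivative \<phi> x) (at x within {0..1})"
        by (simp add: has_real_derivative_iff_has_vector_derivative \<phi>_def)
    qed simp
    then show ?thesis by (simp add: integral_unique)
  qed
  have eq: "{x\<in>{0..1}. D * \<psi> x + (\<kappa> - 1) * \<phi> x - \<kappa> * integral {0..1} \<phi> \<noteq> \<mu> * \<phi> x} = {}"
  proof -
    have "D * \<psi> x + (\<kappa> - 1) * \<phi> x - \<kappa> * 0 = \<mu> * \<phi> x" for x
      unfolding \<mu>_def \<phi>_def \<psi>_def by algebra
    then show ?thesis unfolding intphi by blast
  qed
  have p0: "\<phi> 0 \<noteq> 0" unfolding \<phi>_def by simp
  have NN: "{x\<in>{0..1}. D * \<psi> x + (\<kappa> - 1) * \<phi> x - \<kappa> * integral {0..1} \<phi> \<noteq> \<mu> * \<phi> x}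
          \<in> null_sets lebesgue" unfolding eq by simp
  have "lin_eigenvalue D \<kappa> \<mu>"
    unfolding lin_eigenvalue_def
    apply (rule exI[of _ \<phi>], rule exI[of _ \<psi>])
    using W p0 NN by blast
  then show ?thesis unfolding linearly_unstable_def using mu by blast
qed

theorem mainTheorem6:
  fixes D \<kappa> :: real
  assumes "D > 0" and "\<kappa> > 0"
  shows "(\<kappa> < 1 + 4 * pi\<^sup>2 * D \<longrightarrow> linearly_stable D \<kappa>) \<and>
         (\<kappa> > 1 + 4 * pi\<^sup>2 * D \<longrightarrow> linearly_unstable D \<kappa>)"
  using stable_part[OF assms(1)] unstable_part[OF assms(1)]
  unfolding linearly_stable_def by blast

end
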